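(* Let $T$ be a tree and let $f_0,f_t$ be token-placements of $T$ with colors $\{1,2\}$ having the same number of color-1 tokens. For an edge $e=xy$ let $T(x)$ be the component of $T-e$ containing $x$ and $\mathrm{diff}(e)=\bigl|\,|\{v\in T(x): f_0(v)=1\}|-|\{v\in T(x): f_t(v)=1\}|\,\bigr|$. Then $\mathrm{OPT}(f_0,f_t)=\sum_{e\in E(T)}\mathrm{diff}(e)$.
   Context: A token-placement of a graph $G=(V,E)$ with colors $C=\{1,\dots,c\}$ is a surjective map $f\colon V\to C$. Two distinct token-placements $f,f'$ are adjacent if there is an edge $uv\in E$ with $f'(u)=f(v)$, $f'(v)=f(u)$ and $f'(w)=f(w)$ for all other $w$. A swapping sequence between $f$ and $f'$ is a sequence $f_1=f,\dots,f_h=f'$ of token-placements with consecutive members adjacent; its length is $h-1$. $\mathrm{OPT}(f,f')$ is the minimum length of such a sequence. *)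

theory Defs
  imports Main
begin

definition simple_graph :: "'a set \<Rightarrow> 'a set set \<Rightarrow> bool" where
  "simple_graph V E \<longleftrightarrow> finite V \<and>
     (\<forall>e\<in>E. \<exists>u v. e = {u, v} \<and> u \<noteq> v \<and> u \<in> V \<and> v \<in> V)"

definition connected_graph :: "'a set \<Rightarrow> 'a set set \<Rightarrow> bool" where
  "connected_graph V E \<longleftrightarrow> (\<forall>u\<in>V. \<forall>v\<in>V. (\<lambda>a b. {a, b} \<in> E)\<^sup>*\<^sup>* u v)"

definition has_cycle :: "'a set set \<Rightarrow> bool" where
  "has_cycle E \<longleftrightarrow> (\<exists>vs. length vs \<ge> 3 \<and> distinct vs \<and>
       (\<forall>i. Suc i < length vs \<longrightarrow> {vs ! i, vs ! Suc i} \<in> E) \<and>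
       {last vs, hd vs} \<in> E)"

definition is_tree :: "'a set \<Rightarrow> 'a set set \<Rightarrow> bool" where
  "is_tree V E \<longleftrightarrow> simple_graph V E \<and> V \<noteq> {} \<and> connected_graph V E \<and> \<not> has_cycle E"

(* token placement with colours {1..c}: surjective map V -> {1..c}
   (made extensional: value 0 outside V) *)
definition token_placement :: "'a set \<Rightarrow> nat \<Rightarrow> ('a \<Rightarrow> nat) \<Rightarrow> bool" where
  "token_placement V c f \<longleftrightarrow> f ` V = {1..c} \<and> (\<forall>w. w \<notin> V \<longrightarrow> f w = 0)"

definition tp_adjacent :: "'a set set \<Rightarrow> ('a \<Rightarrow> nat) \<Rightarrow> ('a \<Rightarrow> nat) \<Rightarrow> bool" where
  "tp_adjacent E f f' \<longleftrightarrow> f \<noteq> f' \<and>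
     (\<exists>u v. {u, v} \<in> E \<and> f' u = f v \<and> f' v = f u \<and> (\<forall>w. w \<noteq> u \<and> w \<noteq> v \<longrightarrow> f' w = f w))"

(* swapping sequence f_1 = f, ..., f_h = f' (as a nonempty list); its length is h - 1 *)
definition swap_seq :: "'a set \<Rightarrow> nat \<Rightarrow> 'a set set \<Rightarrow> ('a \<Rightarrow> nat) \<Rightarrow> ('a \<Rightarrow> nat)
    \<Rightarrow> ('a \<Rightarrow> nat) list \<Rightarrow> bool" where
  "swap_seq V c E f f' fs \<longleftrightarrow> fs \<noteq> [] \<and> hd fs = f \<and> last fs = f' \<and>
     (\<forall>g\<in>set fs. token_placement V c g) \<and>
     (\<forall>i. Suc i < length fs \<longrightarrow> tp_adjacent E (fs ! i) (fs ! Suc i))"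

definition OPT :: "'a set \<Rightarrow> nat \<Rightarrow> 'a set set \<Rightarrow> ('a \<Rightarrow> nat) \<Rightarrow> ('a \<Rightarrow> nat) \<Rightarrow> nat" where
  "OPT V c E f f' = (LEAST n. \<exists>fs. swap_seq V c E f f' fs \<and> length fs = Suc n)"

definition comp_minus :: "'a set \<Rightarrow> 'a set set \<Rightarrow> 'a set \<Rightarrow> 'a \<Rightarrow> 'a set" where
  "comp_minus V E e x = {v \<in> V. (\<lambda>a b. {a, b} \<in> E - {e})\<^sup>*\<^sup>* x v}"

definition diff_edge :: "'a set \<Rightarrow> 'a set set \<Rightarrow> ('a \<Rightarrow> nat) \<Rightarrow> ('a \<Rightarrow> nat) \<Rightarrow> 'a set \<Rightarrow> nat" where
  "diff_edge V E f0 ft e = (let x = (SOME x. x \<in> e); Tx = comp_minus V E e x in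
     nat \<bar>int (card {v \<in> Tx. f0 v = 1}) - int (card {v \<in> Tx. ft v = 1})\<bar>)"

end

theory Submission
  imports Defs
begin

lemma simple_path:
  assumes "r\<^sup>*\<^sup>* x w"
  shows "\<exists>vs. vs \<noteq> [] \<and> hd vs = x \<and> last vs = w \<and> distinct vs \<and>
           (\<forall>i. Suc i < length vs \<longrightarrow> r (vs!i) (vs!Suc i))"
  using assms
proof (induction rule: rtranclp_induct)
  case base
  then show ?case by (intro exI[of _ "[x]"]) auto
next
  case (step v w)
  then obtain vs where vs: "vs \<noteq> []" "hd vs = x" "last vs = v" "distinct vs"
    "\<forall>i. Suc i < length vs \<longrightarrow> r (vs!i) (vs!Suc i)" by blast
  show ?case
  proof (cases "w \<in> set vs")
    case True
    then obtain i where i: "i < length vs" "vs!i = w" by (auto simp: in_set_conv_nth)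
    show ?thesis
    proof (intro exI[of _ "take (Suc i) vs"] conjI allI impI)
      show "take (Suc i) vs \<noteq> []" using vs(1) by simp
      show "hd (take (Suc i) vs) = x" using vs(2) by simp
      show "last (take (Suc i) vs) = w" using i
        by (simp add: take_Suc_conv_app_nth)
      show "distinct (take (Suc i) vs)" using vs(4) by simp
      fix j assume "Suc j < length (take (Suc i) vs)"
      then show "r (take (Suc i) vs ! j) (take (Suc i) vs ! Suc j)"
        using vs(5) by simp
    qed
  next
    case False
    show ?thesis
    proof (intro exI[of _ "vs @ [w]"] conjI allI impI)
      show "vs @ [w] \<noteq> []" by simp
      show "hd (vs @ [w]) = x" using vs by simp
      show "last (vs @ [w]) = w" by simp
      show "distinct (vs @ [w])" using vs False by simp
      fix j assume j: "Suc j < length (vs @ [w])"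
      show "r ((vs @ [w]) ! j) ((vs @ [w]) ! Suc j)"
      proof (cases "Suc j < length vs")
        case True then show ?thesis using vs(5) by (simp add: nth_append)
      next
        case False
        then have "j = length vs - 1" "Suc j = length vs" using j by auto
        then show ?thesis using vs(1,3) step.hyps(2)
          by (simp add: nth_append last_conv_nth)
      qed
    qed
  qed
qed

lemma sym_rtc:
  "(\<lambda>a b. {a,b} \<in> F)\<^sup>*\<^sup>* a b \<Longrightarrow> (\<lambda>a b. {a,b} \<in> F)\<^sup>*\<^sup>* b a"
proof (induction rule: rtranclp_induct)
  case base then show ?case by simp
next
  case (step v w)
  then show ?case by (metis (mono_tags, lifting) converse_rtranclp_into_rtranclp insert_commute)
qed

definition cnt :: "('a \<Rightarrow> nat) \<Rightarrow> 'a set \<Rightarrow> nat" where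
  "cnt h S = card {w\<in>S. h w = 1}"

lemma cnt_sum: "finite S \<Longrightarrow> cnt h S = (\<Sum>w\<in>S. if h w = 1 then 1 else 0)"
  unfolding cnt_def by (simp add: sum.inter_filter[symmetric])

lemma nat_abs_step: "(a::nat) \<le> b + 1 \<Longrightarrow> b \<le> a + 1 \<Longrightarrow> nat \<bar>int a - int c\<bar> \<le> nat \<bar>int b - int c\<bar> + 1"
  by linarith

lemma nat_abs_dec: "(a::nat) < c \<Longrightarrow> nat \<bar>int (a+1) - int c\<bar> < nat \<bar>int a - int c\<bar>"
  by linarith

lemma sdelta: "finite E \<Longrightarrow> x \<in> E \<Longrightarrow> (\<Sum>e\<in>E. f e + (if e = x then 1 else 0)) = (\<Sum>e\<in>E. f e) + (1::nat)"
  by (simp add: sum.distrib)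

locale tctx =
  fixes V :: "'a set" and E :: "'a set set" and ft :: "'a \<Rightarrow> nat"
  assumes tree: "is_tree V E" and tpft: "token_placement V 2 ft"
begin

abbreviation side where "side x y \<equiv> comp_minus V E {x,y} x"

lemma finV: "finite V" using tree by (simp add: is_tree_def simple_graph_def)

lemma edgeE: "e \<in> E \<Longrightarrow> \<exists>u v. e = {u,v} \<and> u \<noteq> v \<and> u \<in> V \<and> v \<in> V"
  using tree by (auto simp: is_tree_def simple_graph_def)

lemma edge_V: assumes "{x,y} \<in> E" shows "x \<in> V" "y \<in> V" "x \<noteq> y"
  using edgeE[OF assms] by (auto simp: doubleton_eq_iff)

lemma finE: "finite E"
proof (rule finite_subset[of E "Pow V"])
  show "E \<subseteq> Pow V" using edgeE by blast
qed (simp add: finV)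

lemma conn: "u \<in> V \<Longrightarrow> v \<in> V \<Longrightarrow> (\<lambda>a b. {a,b} \<in> E)\<^sup>*\<^sup>* u v"
  using tree by (auto simp: is_tree_def connected_graph_def)

lemma no_bypass:
  assumes e: "{x,y} \<in> E" and p: "(\<lambda>a b. {a,b} \<in> E - {{x,y}})\<^sup>*\<^sup>* x y"
  shows False
proof -
  obtain vs where vs: "vs \<noteq> []" "hd vs = x" "last vs = y" "distinct vs"
    "\<forall>i. Suc i < length vs \<longrightarrow> {vs!i, vs!Suc i} \<in> E - {{x,y}}"
    using simple_path[OF p] by blast
  have xy: "x \<noteq> y" using edge_V(3)[OF e] .
  have len: "length vs \<ge> 3"
  proof (cases vs)
    case Nil then show ?thesis using vs by simp
  next
    case c1: (Cons a t)
    show ?thesis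
    proof (cases t)
      case Nil then show ?thesis using vs c1 xy by simp
    next
      case c2: (Cons b t2)
      show ?thesis
      proof (cases t2)
        case Nil
        then have "vs = [a,b]" using c1 c2 by simp
        then show ?thesis using vs(2,3) vs(5)[rule_format, of 0] by simp
      next
        case (Cons c t3) then show ?thesis using c1 c2 by simp
      qed
    qed
  qed
  have "has_cycle E" unfolding has_cycle_def
    using vs len e by (intro exI[of _ vs]) (auto simp: insert_commute)
  then show False using tree by (simp add: is_tree_def)
qed

lemma side_self: "{x,y} \<in> E \<Longrightarrow> x \<in> side x y"
  by (simp add: comp_minus_def edge_V)

lemma side_sub: "comp_minus V E e p \<subseteq> V"
  by (auto simp: comp_minus_def)

lemma not_in_side: "{x,y} \<in> E \<Longrightarrow> y \<notin> side x y"
  using no_bypass by (auto simp: comp_minus_def)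

lemma closed: "a \<in> comp_minus V E e p \<Longrightarrow> {a,b} \<in> E \<Longrightarrow> {a,b} \<noteq> e \<Longrightarrow> b \<in> comp_minus V E e p"
  unfolding comp_minus_def using edge_V(2)
  by (auto intro: rtranclp.rtrancl_into_rtrancl)

lemma cover:
  assumes e: "{x,y} \<in> E" and w: "w \<in> V"
  shows "w \<in> side x y \<or> w \<in> side y x"
proof -
  have "(\<lambda>a b. {a,b} \<in> E)\<^sup>*\<^sup>* x w" using conn edge_V e w by blast
  then show ?thesis
  proof (induction rule: rtranclp_induct)
    case base show ?case using side_self e by blast
  next
    case (step v u)
    show ?case
    proof (cases "{v,u} = {x,y}")
      case True
      then have "u = x \<or> u = y" by blast
      then show ?thesis using side_self[OF e] side_self[of y x] e by (auto simp: insert_commute)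
    next
      case False
      then show ?thesis using step closed[of v "{x,y}" x u] closed[of v "{y,x}" y u]
        by (auto simp: insert_commute)
    qed
  qed
qed

lemma disj:
  assumes e: "{x,y} \<in> E"
  shows "side x y \<inter> side y x = {}"
proof (rule ccontr)
  assume "side x y \<inter> side y x \<noteq> {}"
  then obtain w where w1: "w \<in> side x y" and w2: "w \<in> side y x" by blast
  have r1: "(\<lambda>a b. {a,b} \<in> E - {{x,y}})\<^sup>*\<^sup>* x w" using w1 by (simp add: comp_minus_def)
  have r2: "(\<lambda>a b. {a,b} \<in> E - {{x,y}})\<^sup>*\<^sup>* y w" using w2 by (simp add: comp_minus_def insert_commute)
  have "(\<lambda>a b. {a,b} \<in> E - {{x,y}})\<^sup>*\<^sup>* x y"
    using rtranclp_trans[OF r1 sym_rtc[OF r2]] .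
  then show False using no_bypass e by blast
qed

lemma part:
  assumes e: "{x,y} \<in> E" shows "side y x = V - side x y"
proof -
  have 1: "side y x \<subseteq> V" "side x y \<subseteq> V" using side_sub by blast+
  have 2: "side x y \<inter> side y x = {}" using disj[OF e] .
  have 3: "\<forall>w\<in>V. w \<in> side x y \<or> w \<in> side y x" using cover[OF e] by blast
  show ?thesis using 1 2 3 by blast
qed

lemma sub:
  assumes xy: "{x,y}\<in>E" and yz: "{y,z}\<in>E" and zx: "z \<noteq> x"
  shows "side z y \<subseteq> side y x"
proof
  fix w assume "w \<in> side z y"
  then have wV: "w\<in>V" and p: "(\<lambda>a b. {a,b} \<in> E - {{z,y}})\<^sup>*\<^sup>* z w"
    by (auto simp: comp_minus_def)
  have "(\<lambda>a b. {a,b} \<in> E - {{y,x}})\<^sup>*\<^sup>* y w" using p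
  proof (induction rule: rtranclp_induct)
    case base
    have "{y,z} \<noteq> {y,x}" using zx by (auto simp: doubleton_eq_iff)
    then show ?case using yz by (auto intro: r_into_rtranclp)
  next
    case (step v u)
    show ?case
    proof (cases "{v,u} = {y,x}")
      case True
      then have "y = v \<or> y = u" by blast
      moreover have "(\<lambda>a b. {a,b}\<in>E-{{z,y}})\<^sup>*\<^sup>* z u"
        using step.hyps by (auto intro: rtranclp.rtrancl_into_rtrancl)
      ultimately have "(\<lambda>a b. {a,b}\<in>E-{{z,y}})\<^sup>*\<^sup>* z y" using step.hyps(1) by auto
      then show ?thesis using no_bypass[of z y] yz by (auto simp: insert_commute)
    next
      case False then show ?thesis using step by (auto intro: rtranclp.rtrancl_into_rtrancl)
    qed
  qed
  then show "w \<in> side y x" using wV by (simp add: comp_minus_def)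
qed

lemma decomp:
  assumes xy: "{x,y}\<in>E"
  shows "side y x = insert y (\<Union>z\<in>{z. {y,z}\<in>E \<and> z \<noteq> x}. side z y)"
proof
  show "insert y (\<Union>z\<in>{z. {y,z}\<in>E \<and> z \<noteq> x}. side z y) \<subseteq> side y x"
    using side_self[of y x] xy sub[OF xy] by (auto simp: insert_commute)
  show "side y x \<subseteq> insert y (\<Union>z\<in>{z. {y,z}\<in>E \<and> z \<noteq> x}. side z y)"
  proof
    fix w assume "w \<in> side y x"
    then have p: "(\<lambda>a b. {a,b}\<in>E-{{y,x}})\<^sup>*\<^sup>* y w" by (simp add: comp_minus_def)
    have "w = y \<or> (\<exists>z. {y,z}\<in>E \<and> z\<noteq>x \<and> w \<in> side z y)" using p
    proof (induction rule: rtranclp_induct)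
      case base then show ?case by simp
    next
      case (step v u)
      then have vu: "{v,u}\<in>E" "{v,u} \<noteq> {y,x}" by auto
      from step.IH show ?case
      proof
        assume "v = y"
        then have yu: "{y,u}\<in>E" "u\<noteq>x" using vu by auto
        moreover have "u \<in> side u y" using side_self[of u y] yu by (simp add: insert_commute)
        ultimately show ?case by blast
      next
        assume "\<exists>z. {y,z}\<in>E \<and> z\<noteq>x \<and> v \<in> side z y"
        then obtain z where z: "{y,z}\<in>E" "z\<noteq>x" "v \<in> side z y" by blast
        show ?case
        proof (cases "{v,u} = {z,y}")
          case True then have "u = z \<or> u = y" by blast
          then show ?thesis using z side_self[of z y] by (auto simp: insert_commute)
        next
          case False then have "u \<in> side z y" using closed[OF z(3) vu(1)] by blast
          then show ?thesis using z by blast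
        qed
      qed
    qed
    then show "w \<in> insert y (\<Union>z\<in>{z. {y,z}\<in>E \<and> z \<noteq> x}. side z y)" by blast
  qed
qed

lemma nbr_disj: "{y,z1}\<in>E \<Longrightarrow> {y,z2}\<in>E \<Longrightarrow> z1\<noteq>z2 \<Longrightarrow> side z1 y \<inter> side z2 y = {}"
  using sub[of z1 y z2] disj[of z1 y] by (auto simp: insert_commute)

lemma fin_side: "finite (comp_minus V E e p)"
  using finite_subset[OF side_sub finV] .

lemma cnt_part:
  assumes e: "{x,y}\<in>E" shows "cnt h (side y x) + cnt h (side x y) = cnt h V"
proof -
  have "{w\<in>V. h w = 1} = {w\<in>side y x. h w = 1} \<union> {w\<in>side x y. h w = 1}"
    using part[OF e] side_sub by blast
  moreover have "{w\<in>side y x. h w = 1} \<inter> {w\<in>side x y. h w = 1} = {}"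
    using part[OF e] by blast
  ultimately show ?thesis unfolding cnt_def
    by (simp add: card_Un_disjoint fin_side)
qed

lemma cnt_decomp:
  assumes xy: "{x,y}\<in>E"
  shows "cnt h (side y x) = (if h y = 1 then 1 else 0) + (\<Sum>z\<in>{z. {y,z}\<in>E \<and> z\<noteq>x}. cnt h (side z y))"
proof -
  let ?N = "{z. {y,z}\<in>E \<and> z\<noteq>x}"
  let ?f = "\<lambda>w. if h w = 1 then 1 else 0 :: nat"
  have finN: "finite ?N" using finite_subset[of ?N V] finV edge_V(2) by blast
  have fin: "\<forall>z\<in>?N. finite (side z y)" using fin_side by blast
  have dj: "\<forall>i\<in>?N. \<forall>j\<in>?N. i\<noteq>j \<longrightarrow> side i y \<inter> side j y = {}" using nbr_disj by blast
  have ny: "y \<notin> (\<Union>z\<in>?N. side z y)" using not_in_side by (auto simp: insert_commute)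
  have fU: "finite (\<Union>z\<in>?N. side z y)" using finN fin by blast
  have a: "cnt h (side y x) = sum ?f (insert y (\<Union>z\<in>?N. side z y))"
    by (subst decomp[OF xy, symmetric]) (simp add: cnt_sum fin_side)
  have b: "sum ?f (insert y (\<Union>z\<in>?N. side z y)) = ?f y + sum ?f (\<Union>z\<in>?N. side z y)"
    by (rule sum.insert[OF fU ny])
  have c: "sum ?f (\<Union>z\<in>?N. side z y) = (\<Sum>z\<in>?N. sum ?f (side z y))"
    using sum.UNION_disjoint[OF finN fin dj] .
  have d: "(\<Sum>z\<in>?N. sum ?f (side z y)) = (\<Sum>z\<in>?N. cnt h (side z y))"
    by (rule sum.cong[OF refl]) (simp add: cnt_sum fin_side)
  show ?thesis using a b c d by simp
qed

abbreviation D where "D h \<equiv> (\<Sum>e\<in>E. diff_edge V E h ft e)"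

lemma diff_cnt: "diff_edge V E h ft e =
   nat \<bar>int (cnt h (comp_minus V E e (SOME x. x\<in>e))) - int (cnt ft (comp_minus V E e (SOME x. x\<in>e)))\<bar>"
  by (simp add: diff_edge_def cnt_def Let_def)

lemma swap_cnt1:
  assumes uv: "{u,v}\<in>E" and gu: "g' u = g v" and gv: "g' v = g u"
    and oth: "\<forall>w. w\<noteq>u \<and> w\<noteq>v \<longrightarrow> g' w = g w"
    and e: "e\<in>E" and ne: "e \<noteq> {u,v}"
  shows "cnt g' (comp_minus V E e p) = cnt g (comp_minus V E e p)"
proof -
  let ?S = "comp_minus V E e p"
  have uv': "u \<noteq> v" using edge_V(3)[OF uv] .
  have iff: "u \<in> ?S \<longleftrightarrow> v \<in> ?S"
    using closed[of u e p v] closed[of v e p u] uv ne by (auto simp: insert_commute)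
  show ?thesis
  proof (cases "u \<in> ?S")
    case True
    then have vS: "v \<in> ?S" using iff by blast
    let ?f = "\<lambda>h w. if h w = 1 then 1 else (0::nat)"
    have split: "\<And>h. sum (?f h) ?S = ?f h u + ?f h v + sum (?f h) (?S - {u} - {v})"
    proof -
      fix h
      have "sum (?f h) ?S = ?f h u + sum (?f h) (?S - {u})"
        by (rule sum.remove[OF fin_side True])
      also have "sum (?f h) (?S - {u}) = ?f h v + sum (?f h) (?S - {u} - {v})"
        by (rule sum.remove) (use fin_side vS uv' in auto)
      finally show "sum (?f h) ?S = ?f h u + ?f h v + sum (?f h) (?S - {u} - {v})" by simp
    qed
    have rest: "sum (?f g') (?S - {u} - {v}) = sum (?f g) (?S - {u} - {v})"
      using oth by (intro sum.cong) auto
    show ?thesis using split[of g'] split[of g] rest gu gv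
      by (simp add: cnt_sum fin_side)
  next
    case False
    then have "v \<notin> ?S" using iff by blast
    then have "{w\<in>?S. g' w = 1} = {w\<in>?S. g w = 1}" using False oth by auto
    then show ?thesis by (simp add: cnt_def)
  qed
qed

lemma swap_cnt2:
  assumes uv: "{u,v}\<in>E"
    and oth: "\<forall>w. w\<noteq>u \<and> w\<noteq>v \<longrightarrow> g' w = g w"
    and p: "p \<in> {u,v}"
  shows "cnt g' (comp_minus V E {u,v} p) \<le> cnt g (comp_minus V E {u,v} p) + 1"
proof -
  let ?S = "comp_minus V E {u,v} p"
  have "\<forall>w\<in>?S. w \<noteq> p \<longrightarrow> w \<noteq> u \<and> w \<noteq> v"
  proof (cases "p = u")
    case True then show ?thesis using not_in_side[OF uv] by auto
  next
    case False then have "p = v" using p by blast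
    then show ?thesis using not_in_side[of v u] uv by (auto simp: insert_commute)
  qed
  then have "{w\<in>?S. g' w = 1} \<subseteq> insert p {w\<in>?S. g w = 1}" using oth by auto
  then have "card {w\<in>?S. g' w = 1} \<le> card (insert p {w\<in>?S. g w = 1})"
    by (rule card_mono[rotated]) (simp add: fin_side)
  also have "\<dots> \<le> card {w\<in>?S. g w = 1} + 1" by (simp add: card_insert_le_m1 card_insert_if fin_side)
  finally show ?thesis by (simp add: cnt_def)
qed

lemma D_step:
  assumes adj: "tp_adjacent E g g'"
  shows "D g \<le> D g' + 1"
proof -
  obtain u v where uv: "{u,v}\<in>E" "g' u = g v" "g' v = g u" "\<forall>w. w\<noteq>u \<and> w\<noteq>v \<longrightarrow> g' w = g w"
    using adj by (auto simp: tp_adjacent_def)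
  have oth': "\<forall>w. w\<noteq>u \<and> w\<noteq>v \<longrightarrow> g w = g' w" using uv(4) by auto
  have each: "diff_edge V E g ft e \<le> diff_edge V E g' ft e + (if e = {u,v} then 1 else 0)" if e: "e\<in>E" for e
  proof -
    let ?p = "SOME x. x\<in>e"
    let ?S = "comp_minus V E e ?p"
    have pe: "?p \<in> e" using edgeE[OF e] by (metis insertI1 someI_ex)
    show ?thesis
    proof (cases "e = {u,v}")
      case True
      have a: "cnt g' ?S \<le> cnt g ?S + 1" using swap_cnt2[OF uv(1) uv(4)] pe True by simp
      have b: "cnt g ?S \<le> cnt g' ?S + 1" using swap_cnt2[OF uv(1) oth'] pe True by simp
      have "diff_edge V E g ft e \<le> diff_edge V E g' ft e + 1"
        unfolding diff_cnt by (rule nat_abs_step[OF b a])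
      then show ?thesis using True by simp
    next
      case False
      have "cnt g' ?S = cnt g ?S" using swap_cnt1[OF uv e False] .
      then have "diff_edge V E g ft e = diff_edge V E g' ft e" unfolding diff_cnt by simp
      then show ?thesis using False by simp
    qed
  qed
  have "D g \<le> (\<Sum>e\<in>E. diff_edge V E g' ft e + (if e = {u,v} then 1 else 0))"
    using each by (intro sum_mono) auto
  also have "\<dots> = D g' + 1" by (rule sdelta[OF finE uv(1)])
  finally show ?thesis .
qed

lemma lower: "swap_seq V 2 E g ft fs \<Longrightarrow> D g \<le> length fs - 1"
proof (induction fs arbitrary: g)
  case Nil then show ?case by (simp add: swap_seq_def)
next
  case (Cons a t)
  show ?case
  proof (cases "t = []")
    case True
    then have "g = ft" using Cons.prems unfolding swap_seq_def by force
    then show ?thesis by (simp add: diff_edge_def Let_def)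
  next
    case False
    then obtain b t' where t: "t = b # t'" by (cases t) auto
    from Cons.prems have sq: "a = g" "last (b#t') = ft" "\<forall>x\<in>set (a#b#t'). token_placement V 2 x"
      "\<forall>i. Suc i < length (a#b#t') \<longrightarrow> tp_adjacent E ((a#b#t')!i) ((a#b#t')!Suc i)"
      unfolding swap_seq_def t by auto
    have adj: "tp_adjacent E g b" using sq(4)[rule_format, of 0] sq(1) by simp
    have a4: "\<forall>i. Suc i < length (b#t') \<longrightarrow> tp_adjacent E ((b#t')!i) ((b#t')!Suc i)"
    proof (intro allI impI)
      fix i assume "Suc i < length (b#t')"
      then show "tp_adjacent E ((b#t')!i) ((b#t')!Suc i)" using sq(4)[rule_format, of "Suc i"] by simp
    qed
    have "swap_seq V 2 E b ft (b#t')" using sq(2,3) a4 unfolding swap_seq_def by simp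
    then have "D b \<le> length (b#t') - 1" using Cons.IH t by blast
    then show ?thesis using D_step[OF adj] t by simp
  qed
qed

lemma tp_vals: "token_placement V 2 h \<Longrightarrow> w\<in>V \<Longrightarrow> h w = 1 \<or> h w = 2"
proof -
  assume "token_placement V 2 h" "w\<in>V"
  then have "h w \<in> {1..2}" by (auto simp: token_placement_def)
  then show ?thesis by auto
qed

lemma push:
  assumes xy: "{x,y}\<in>E" and gy: "g y = 1"
    and lt: "cnt g (side y x) < cnt ft (side y x) + (if ft y = 1 then 0 else 1)"
  shows "\<exists>z. {y,z}\<in>E \<and> z\<noteq>x \<and> cnt g (side z y) < cnt ft (side z y)"
proof (rule ccontr)
  assume "\<not> ?thesis"
  then have "(\<Sum>z\<in>{z. {y,z}\<in>E \<and> z\<noteq>x}. cnt ft (side z y)) \<le> (\<Sum>z\<in>{z. {y,z}\<in>E \<and> z\<noteq>x}. cnt g (side z y))"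
    by (intro sum_mono) auto
  then show False using lt cnt_decomp[OF xy, of g] cnt_decomp[OF xy, of ft] gy
    by (auto split: if_splits)
qed

lemma diff_side:
  assumes e: "{a,b}\<in>E" and eqc: "cnt h V = cnt ft V"
  shows "diff_edge V E h ft {a,b} = nat \<bar>int (cnt h (side a b)) - int (cnt ft (side a b))\<bar>"
proof -
  have "(SOME p. p \<in> {a,b}) \<in> {a,b}" by (rule someI[of _ a]) simp
  then consider "(SOME p. p\<in>{a,b}) = a" | "(SOME p. p\<in>{a,b}) = b" by blast
  then show ?thesis
  proof cases
    case 1 then show ?thesis by (simp add: diff_cnt)
  next
    case 2
    have c1: "int (cnt h (side b a)) + int (cnt h (side a b)) = int (cnt h V)"
      using cnt_part[OF e] by (metis of_nat_add)
    have c2: "int (cnt ft (side b a)) + int (cnt ft (side a b)) = int (cnt ft V)"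
      using cnt_part[OF e] by (metis of_nat_add)
    have d: "diff_edge V E h ft {a,b} = nat \<bar>int (cnt h (side b a)) - int (cnt ft (side b a))\<bar>"
      unfolding diff_cnt 2 by (simp only: insert_commute)
    have "int (cnt h (side b a)) - int (cnt ft (side b a)) = - (int (cnt h (side a b)) - int (cnt ft (side a b)))"
      using c1 c2 eqc by linarith
    then show ?thesis using d by simp
  qed
qed

lemma tp_out: "token_placement V 2 h \<Longrightarrow> w \<notin> V \<Longrightarrow> h w = 0"
  by (simp add: token_placement_def)

lemma improve:
  assumes tpg: "token_placement V 2 g" and eqc: "cnt g V = cnt ft V" and ne: "g \<noteq> ft"
  shows "\<exists>g'. token_placement V 2 g' \<and> tp_adjacent E g g' \<and> cnt g' V = cnt ft V \<and> D g' < D g"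
proof -
  obtain v where v: "v\<in>V" "g v = 1" "ft v \<noteq> 1"
  proof -
    let ?A = "{w\<in>V. g w = 1}" and ?B = "{w\<in>V. ft w = 1}"
    have cAB: "card ?A = card ?B" using eqc by (simp add: cnt_def)
    have "\<not> ?A \<subseteq> ?B"
    proof
      assume sub: "?A \<subseteq> ?B"
      then have AB: "?A = ?B" using cAB finV by (intro card_subset_eq) auto
      have "g = ft"
      proof
        fix w show "g w = ft w"
        proof (cases "w \<in> V")
          case True
          then have "g w = 1 \<longleftrightarrow> ft w = 1" using AB by blast
          then show ?thesis using tp_vals[OF tpg True] tp_vals[OF tpft True] by auto
        next
          case False then show ?thesis using tp_out[OF tpg] tp_out[OF tpft] by simp
        qed
      qed
      then show False using ne by simp
    qed
    then show ?thesis using that by blast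
  qed
  have "(2::nat) \<in> g ` V" using tpg by (simp add: token_placement_def)
  then obtain w where w: "w\<in>V" "g w = 2" by (metis imageE)
  have "w \<noteq> v" using v w by auto
  obtain y0 where y0: "{v,y0}\<in>E"
  proof -
    have "(\<lambda>a b. {a,b} \<in> E)\<^sup>*\<^sup>* v w" using conn v(1) w(1) by blast
    then show ?thesis using \<open>w \<noteq> v\<close> that by (cases rule: converse_rtranclpE) auto
  qed
  have e0: "{y0,v}\<in>E" using y0 by (simp add: insert_commute)
  obtain z where z: "{v,z}\<in>E" "cnt g (side z v) < cnt ft (side z v)"
  proof (cases "cnt g (side y0 v) < cnt ft (side y0 v)")
    case True then show ?thesis using that y0 by blast
  next
    case False
    have c1: "cnt g (side v y0) + cnt g (side y0 v) = cnt g V" using cnt_part[OF e0] .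
    have c2: "cnt ft (side v y0) + cnt ft (side y0 v) = cnt ft V" using cnt_part[OF e0] .
    have "cnt g (side v y0) < cnt ft (side v y0) + (if ft v = 1 then 0 else 1)"
      using c1 c2 eqc False v(3) by simp
    then obtain z where "{v,z}\<in>E" "cnt g (side z v) < cnt ft (side z v)"
      using push[of y0 v g, OF e0 v(2)] by blast
    then show ?thesis using that by blast
  qed
  define P where "P = (\<lambda>q::'a\<times>'a. {fst q, snd q}\<in>E \<and> g (fst q) = 1 \<and>
      cnt g (side (snd q) (fst q)) < cnt ft (side (snd q) (fst q)))"
  have "P (v,z)" using z v by (simp add: P_def)
  then obtain q where q: "P q" and qmin: "\<And>q'. P q' \<Longrightarrow> card (side (snd q) (fst q)) \<le> card (side (snd q') (fst q'))"
    using ex_has_least_nat[of P "(v,z)" "\<lambda>q. card (side (snd q) (fst q))"] by blast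
  define x where "x = fst q"
  define y where "y = snd q"
  have xy: "{x,y}\<in>E" and gx: "g x = 1" and def: "cnt g (side y x) < cnt ft (side y x)"
    using q by (simp_all add: P_def x_def y_def)
  have min: "\<And>a b. {a,b}\<in>E \<Longrightarrow> g a = 1 \<Longrightarrow> cnt g (side b a) < cnt ft (side b a) \<Longrightarrow>
     card (side y x) \<le> card (side b a)"
    using qmin unfolding P_def x_def y_def by (metis fst_conv snd_conv)
  have xV: "x\<in>V" and yV: "y\<in>V" and xny: "x \<noteq> y" using edge_V[OF xy] by auto
  have gy: "g y = 2"
  proof (rule ccontr)
    assume "g y \<noteq> 2"
    then have gy1: "g y = 1" using tp_vals[OF tpg yV] by auto
    obtain z' where z': "{y,z'}\<in>E" "z'\<noteq>x" "cnt g (side z' y) < cnt ft (side z' y)"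
      using push[of x y g, OF xy gy1] def by fastforce
    have "card (side y x) \<le> card (side z' y)" using min[OF z'(1) gy1 z'(3)] .
    moreover have "side z' y \<subset> side y x"
    proof -
      have "side z' y \<subseteq> side y x" using sub[OF xy z'(1,2)] .
      moreover have "y \<in> side y x" using side_self[of y x] xy by (simp add: insert_commute)
      moreover have "y \<notin> side z' y" using not_in_side[of z' y] z'(1) by (simp add: insert_commute)
      ultimately show ?thesis by blast
    qed
    then have "card (side z' y) < card (side y x)" by (rule psubset_card_mono[OF fin_side])
    ultimately show False by simp
  qed
  define g' where "g' = g(x := 2, y := 1)"
  have g'x: "g' x = 2" and g'y: "g' y = 1" and g'o: "\<forall>w. w\<noteq>x \<and> w\<noteq>y \<longrightarrow> g' w = g w"
    using xny by (simp_all add: g'_def)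
  have tp': "token_placement V 2 g'"
    unfolding token_placement_def
  proof (intro conjI allI impI)
    show "g' ` V = {1..2}"
    proof
      show "g' ` V \<subseteq> {1..2}"
      proof
        fix c assume "c \<in> g' ` V"
        then obtain u where u: "u\<in>V" "c = g' u" by blast
        show "c \<in> {1..2}"
        proof (cases "u = x \<or> u = y")
          case True then show ?thesis using u g'x g'y by auto
        next
          case False then show ?thesis using u g'o tp_vals[OF tpg u(1)] by auto
        qed
      qed
      show "{1..2} \<subseteq> g' ` V"
      proof
        fix c :: nat assume "c \<in> {1..2}"
        then have "c = 1 \<or> c = 2" by auto
        then show "c \<in> g' ` V" using g'x g'y xV yV by (metis image_eqI)
      qed
    qed
    fix u assume uV: "u \<notin> V"
    then have "u \<noteq> x \<and> u \<noteq> y" using xV yV by blast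
    then show "g' u = 0" using g'o tp_out[OF tpg uV] by simp
  qed
  have adj: "tp_adjacent E g g'"
    unfolding tp_adjacent_def
  proof (intro conjI exI)
    show "g \<noteq> g'" using gx g'x by auto
    show "{x,y}\<in>E" by (rule xy)
    show "g' x = g y" using g'x gy by simp
    show "g' y = g x" using g'y gx by simp
    show "\<forall>w. w \<noteq> x \<and> w \<noteq> y \<longrightarrow> g' w = g w" by (rule g'o)
  qed
  have cV: "cnt g' V = cnt ft V"
  proof -
    have "{w\<in>V. g' w = 1} = insert y ({w\<in>V. g w = 1} - {x})"
      unfolding g'_def using xny gx gy yV by auto
    moreover have "y \<notin> {w\<in>V. g w = 1} - {x}" using gy by simp
    moreover have "x \<in> {w\<in>V. g w = 1}" using xV gx by simp
    moreover have "card {w\<in>V. g w = 1} > 0" using finV xV gx by (auto simp: card_gt_0_iff)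
    ultimately have "card {w\<in>V. g' w = 1} = card {w\<in>V. g w = 1}"
      using finV by simp
    then show ?thesis using eqc by (simp add: cnt_def)
  qed
  have rest: "diff_edge V E g' ft e = diff_edge V E g ft e" if e: "e \<in> E - {{x,y}}" for e
  proof -
    have "cnt g' (comp_minus V E e (SOME x. x\<in>e)) = cnt g (comp_minus V E e (SOME x. x\<in>e))"
      using swap_cnt1[of x y g' g e] xy g'x gy g'y gx g'o e by auto
    then show ?thesis unfolding diff_cnt by simp
  qed
  have cS: "cnt g' (side y x) = cnt g (side y x) + 1"
  proof -
    have yS: "y \<in> side y x" using side_self[of y x] xy by (simp add: insert_commute)
    have xS: "x \<notin> side y x" using not_in_side[of y x] xy by (simp add: insert_commute)
    have "{w\<in>side y x. g' w = 1} = insert y {w\<in>side y x. g w = 1}"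
      unfolding g'_def using yS xS xny gy by auto
    moreover have "y \<notin> {w\<in>side y x. g w = 1}" using gy by simp
    ultimately show ?thesis by (simp add: cnt_def fin_side)
  qed
  have eyx: "{y,x}\<in>E" using xy by (simp add: insert_commute)
  have de: "diff_edge V E g' ft {x,y} < diff_edge V E g ft {x,y}"
    using diff_side[OF eyx cV] diff_side[OF eyx eqc] cS nat_abs_dec[OF def]
    by (simp add: insert_commute)
  have "D g' = diff_edge V E g' ft {x,y} + (\<Sum>e\<in>E - {{x,y}}. diff_edge V E g' ft e)"
    by (rule sum.remove[OF finE xy])
  also have "(\<Sum>e\<in>E - {{x,y}}. diff_edge V E g' ft e) = (\<Sum>e\<in>E - {{x,y}}. diff_edge V E g ft e)"
    using rest by (rule sum.cong[OF refl])
  also have "diff_edge V E g' ft {x,y} + (\<Sum>e\<in>E - {{x,y}}. diff_edge V E g ft e) < D g"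
    using de sum.remove[OF finE xy, of "\<lambda>e. diff_edge V E g ft e"] by simp
  finally show ?thesis using tp' adj cV by blast
qed

lemma upper:
  "token_placement V 2 g \<Longrightarrow> cnt g V = cnt ft V \<Longrightarrow> \<exists>fs. swap_seq V 2 E g ft fs \<and> length fs \<le> D g + 1"
proof (induction "D g" arbitrary: g rule: less_induct)
  case less
  show ?case
  proof (cases "g = ft")
    case True
    have "swap_seq V 2 E g ft [ft]" using True tpft by (simp add: swap_seq_def)
    then show ?thesis by fastforce
  next
    case False
    obtain g' where g': "token_placement V 2 g'" "tp_adjacent E g g'" "cnt g' V = cnt ft V" "D g' < D g"
      using improve[OF less.prems False] by blast
    obtain fs where fs: "swap_seq V 2 E g' ft fs" "length fs \<le> D g' + 1"
      using less.hyps[OF g'(4) g'(1) g'(3)] by blast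
    have fne: "fs \<noteq> []" "hd fs = g'" "last fs = ft" "\<forall>x\<in>set fs. token_placement V 2 x"
      "\<forall>i. Suc i < length fs \<longrightarrow> tp_adjacent E (fs!i) (fs!Suc i)"
      using fs(1) by (simp_all add: swap_seq_def)
    have a4: "\<forall>i. Suc i < length (g#fs) \<longrightarrow> tp_adjacent E ((g#fs)!i) ((g#fs)!Suc i)"
    proof (intro allI impI)
      fix i assume i: "Suc i < length (g#fs)"
      show "tp_adjacent E ((g#fs)!i) ((g#fs)!Suc i)"
      proof (cases i)
        case 0 then show ?thesis using g'(2) fne(1,2) by (simp add: hd_conv_nth)
      next
        case (Suc j) then show ?thesis using fne(5) i by simp
      qed
    qed
    have "swap_seq V 2 E g ft (g#fs)" unfolding swap_seq_def
      using fne(1,3,4) a4 less.prems(1) by simp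
    moreover have "length (g#fs) \<le> D g + 1" using fs(2) g'(4) by simp
    ultimately show ?thesis by blast
  qed
qed

end

theorem mainTheorem9:
  fixes V :: "'a set" and E :: "'a set set" and f0 ft :: "'a \<Rightarrow> nat"
  assumes "is_tree V E"
    and "token_placement V 2 f0" and "token_placement V 2 ft"
    and "card {v \<in> V. f0 v = 1} = card {v \<in> V. ft v = 1}"
  shows "OPT V 2 E f0 ft = (\<Sum>e\<in>E. diff_edge V E f0 ft e)"
proof -
  interpret tctx V E ft using assms(1,3) by unfold_locales
  have c: "cnt f0 V = cnt ft V" using assms(4) by (simp add: cnt_def)
  obtain fs where fs: "swap_seq V 2 E f0 ft fs" "length fs \<le> D f0 + 1"
    using upper[OF assms(2) c] by blast
  have "fs \<noteq> []" using fs(1) by (simp add: swap_seq_def)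
  then have ex: "\<exists>fs'. swap_seq V 2 E f0 ft fs' \<and> length fs' = Suc (length fs - 1)"
    using fs(1) by (intro exI[of _ fs]) simp
  have le: "OPT V 2 E f0 ft \<le> length fs - 1"
    unfolding OPT_def by (rule Least_le) (rule ex)
  obtain fs2 where fs2: "swap_seq V 2 E f0 ft fs2" "length fs2 = Suc (OPT V 2 E f0 ft)"
  proof -
    have exn: "\<exists>n. \<exists>fs'. swap_seq V 2 E f0 ft fs' \<and> length fs' = Suc n" using ex by blast
    show ?thesis using LeastI_ex[OF exn] that unfolding OPT_def by blast
  qed
  have "D f0 \<le> OPT V 2 E f0 ft" using lower[OF fs2(1)] fs2(2) by simp
  then show ?thesis using le fs(2) by simp
qed

end
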